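(* Suppose $K\ge c_{\mathsf k}H\log^4\frac{KS(A+B)}{\delta}$ for a sufficiently large universal constant $c_{\mathsf k}$, and the bonus constant $c_{\mathsf b}$ in Nash-Q-FTRL is a sufficiently large universal constant. Then with probability at least $1-\delta$, $\overline V_h(s)\ge\overline V_h^{\star,\widehat\nu}(s)$ for all $s\in\mathcal S$ and all $1\le h\le H$.
   Context: Markov game with states $\mathcal S$ ($|\mathcal S|=S$), actions $\mathcal A$ ($A$) and $\mathcal B$ ($B$), horizon $H$, rewards $r_h(s,a,b)\in[0,1]$, transitions $P_h(\cdot\mid s,a,b)$; $\delta\in(0,1)$. Notation $\alpha_i^k=\alpha_i\prod_{j=i+1}^k(1-\alpha_j)$ ($i<k$), $\alpha_k^k=\alpha_k$; $\mathsf{Var}_\pi(f)=\sum_a\pi(a)(f(a)-\sum_{a'}\pi(a')f(a'))^2$. Algorithm Nash-Q-FTRL (learning rates $\alpha_k=\frac{c_\alpha\log K}{k-1+c_\alpha\log K}$, $c_\alpha\ge24$; $\eta_{k+1}=\sqrt{\log K/(\alpha_kH)}$). Initialize $\overline V_{H+1}=\underline V_{H+1}=0$, $\overline Q_h^0=0$, $\underline Q_h^0=0$, $\mu_h^1,\nu_h^1$ uniform. For $h=H,\dots,1$, for $k=1,\dots,K$: (i) for each $(s,a)$ draw independently $b\sim\nu_h^k(\cdot\mid s)$, $s'\sim P_h(\cdot\mid s,a,b)$, set $\overline r_h^k(s,a)=r_h(s,a,b)$, $\overline P_h^k(\cdot\mid s,a)=\delta_{s'}$; for each $(s,b)$ draw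 independently $a\sim\mu_h^k(\cdot\mid s)$, $s'\sim P_h(\cdot\mid s,a,b)$, set $\underline r_h^k(s,b)=r_h(s,a,b)$, $\underline P_h^k(\cdot\mid s,b)=\delta_{s'}$; (ii) $\overline q_h^k=\overline r_h^k+\overline P_h^k\overline V_{h+1}$, $\underline q_h^k=\underline r_h^k+\underline P_h^k\underline V_{h+1}$, $\overline Q_h^k=(1-\alpha_k)\overline Q_h^{k-1}+\alpha_k\overline q_h^k$, $\underline Q_h^k=(1-\alpha_k)\underline Q_h^{k-1}+\alpha_k\underline q_h^k$; (iii) $\mu_h^{k+1}(a\mid s)\propto\exp(\eta_{k+1}\overline Q_h^k(s,a))$, $\nu_h^{k+1}(b\mid s)\propto\exp(-\eta_{k+1}\underline Q_h^k(s,b))$. Then $\widehat\mu_h=\sum_k\alpha_k^K\mu_h^k$, $\widehat\nu_h=\sum_k\alpha_k^K\nu_h^k$, $\overline V_h(s)=\min\{\sum_k\alpha_k^K\langle\mu_h^k(\cdot\mid s),\overline q_h^k(s,\cdot)\rangle+\overline\beta_{h,V}(s),H-h+1\}$, $\underline V_h(s)=\max\{\sum_k\alpha_k^K\langle\nu_h^k(\cdot\mid s),\underline q_h^k(s,\cdot)\rangle-\underline\beta_{h,V}(s),0\}$, with $\overline\beta_{h,V}(s)=c_{\mathsf b}\sqrt{\log^3\frac{KS(A+B)}{\delta}/(KH)}\sum_k\alpha_k^K\{\mathsf{Var}_{\mu_h^k(\cdot\mid s)}(\overline q_h^k(s,\cdot))+H\}$ and $\underline\beta_{h,V}$ analogous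 with $(\nu_h^k,\underline q_h^k)$. Auxiliary empirical value: $\overline V_{H+1}^{\star,\widehat\nu}=0$ and, for $h\le H$, $\overline V_h^{\star,\widehat\nu}(s)=\max_{a\in\mathcal A}\sum_{k=1}^K\alpha_k^K\big[\overline r_h^k(s,a)+\langle\overline P_h^k(\cdot\mid s,a),\overline V_{h+1}^{\star,\widehat\nu}\rangle\big]$. *)

theory Defs
  imports "HOL-Analysis.Analysis" "HOL-Probability.Probability"
begin

text \<open>
  States are 0..S-1, max-player actions 0..A-1, min-player actions 0..B-1
  (natural numbers), steps h = 1..H, iterations k = 1..K.
  r h s a b is the reward, P h s a b the transition kernel.
  One "sample" at (h,k) is a pair of functions:
    fst: s a |-> (b, s')   (the draws for the max-player update, b ~ nu_h^k(.|s), s' ~ P_h(.|s,a,b))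
    snd: s b |-> (a, s')   (the draws for the min-player update, a ~ mu_h^k(.|s), s' ~ P_h(.|s,a,b)).
  A full run of the random algorithm is omega :: nat => nat => sample  (indexed by h, k).
  All algorithm quantities are deterministic functions of omega; the law of omega is
  defined adaptively (sequential sampling in the algorithm's order) by alg_pmf.
\<close>

type_synonym samp = "(nat \<Rightarrow> nat \<Rightarrow> nat \<times> nat) \<times> (nat \<Rightarrow> nat \<Rightarrow> nat \<times> nat)"

locale nashq =
  fixes S A B H K :: nat
    and c_alpha c_b \<delta> :: real
    and r :: "nat \<Rightarrow> nat \<Rightarrow> nat \<Rightarrow> nat \<Rightarrow> real"
    and P :: "nat \<Rightarrow> nat \<Rightarrow> nat \<Rightarrow> nat \<Rightarrow> nat pmf"
begin

definition alpha :: "nat \<Rightarrow> real" where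
  "alpha k = c_alpha * ln (real K) / (real k - 1 + c_alpha * ln (real K))"

definition alphaK :: "nat \<Rightarrow> real" where
  "alphaK i = alpha i * (\<Prod>j\<in>{i+1..K}. 1 - alpha j)"

text \<open>eta k is the paper's eta_k = sqrt(log K / (alpha_{k-1} H)), used for k >= 2\<close>
definition eta :: "nat \<Rightarrow> real" where
  "eta k = sqrt (ln (real K) / (alpha (k - 1) * real H))"

definition varp :: "nat \<Rightarrow> (nat \<Rightarrow> real) \<Rightarrow> (nat \<Rightarrow> real) \<Rightarrow> real" where
  "varp n \<pi> f = (\<Sum>a<n. \<pi> a * (f a - (\<Sum>a'<n. \<pi> a' * f a')) ^ 2)"

definition bfac :: real where
  "bfac = c_b * sqrt ((ln (real K * real S * (real A + real B) / \<delta>)) ^ 3 / (real K * real H))"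

text \<open>overline q_h^k(s,a) and underline q_h^k(s,b); wh = omega h, Vb/Vu = value at step h+1\<close>
definition qb :: "nat \<Rightarrow> (nat \<Rightarrow> samp) \<Rightarrow> (nat \<Rightarrow> real) \<Rightarrow> nat \<Rightarrow> nat \<Rightarrow> nat \<Rightarrow> real" where
  "qb h wh Vb k s a = r h s a (fst (fst (wh k) s a)) + Vb (snd (fst (wh k) s a))"

definition qu :: "nat \<Rightarrow> (nat \<Rightarrow> samp) \<Rightarrow> (nat \<Rightarrow> real) \<Rightarrow> nat \<Rightarrow> nat \<Rightarrow> nat \<Rightarrow> real" where
  "qu h wh Vu k s b = r h s (fst (snd (wh k) s b)) b + Vu (snd (snd (wh k) s b))"

primrec Qb :: "nat \<Rightarrow> (nat \<Rightarrow> samp) \<Rightarrow> (nat \<Rightarrow> real) \<Rightarrow> nat \<Rightarrow> nat \<Rightarrow> nat \<Rightarrow> real" where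
  "Qb h wh Vb 0 = (\<lambda>s a. 0)"
| "Qb h wh Vb (Suc k) = (\<lambda>s a. (1 - alpha (Suc k)) * Qb h wh Vb k s a + alpha (Suc k) * qb h wh Vb (Suc k) s a)"

primrec Qu :: "nat \<Rightarrow> (nat \<Rightarrow> samp) \<Rightarrow> (nat \<Rightarrow> real) \<Rightarrow> nat \<Rightarrow> nat \<Rightarrow> nat \<Rightarrow> real" where
  "Qu h wh Vu 0 = (\<lambda>s b. 0)"
| "Qu h wh Vu (Suc k) = (\<lambda>s b. (1 - alpha (Suc k)) * Qu h wh Vu k s b + alpha (Suc k) * qu h wh Vu (Suc k) s b)"

definition mu :: "nat \<Rightarrow> (nat \<Rightarrow> samp) \<Rightarrow> (nat \<Rightarrow> real) \<Rightarrow> nat \<Rightarrow> nat \<Rightarrow> nat \<Rightarrow> real" where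
  "mu h wh Vb k s a = (if k \<le> 1 then 1 / real A
     else exp (eta k * Qb h wh Vb (k - 1) s a) / (\<Sum>a'<A. exp (eta k * Qb h wh Vb (k - 1) s a')))"

definition nu :: "nat \<Rightarrow> (nat \<Rightarrow> samp) \<Rightarrow> (nat \<Rightarrow> real) \<Rightarrow> nat \<Rightarrow> nat \<Rightarrow> nat \<Rightarrow> real" where
  "nu h wh Vu k s b = (if k \<le> 1 then 1 / real B
     else exp (- eta k * Qu h wh Vu (k - 1) s b) / (\<Sum>b'<B. exp (- eta k * Qu h wh Vu (k - 1) s b')))"

definition Vbar_step :: "nat \<Rightarrow> (nat \<Rightarrow> samp) \<Rightarrow> (nat \<Rightarrow> real) \<Rightarrow> nat \<Rightarrow> real" where
  "Vbar_step h wh Vb s = min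
     ((\<Sum>k=1..K. alphaK k * (\<Sum>a<A. mu h wh Vb k s a * qb h wh Vb k s a))
      + bfac * (\<Sum>k=1..K. alphaK k * (varp A (mu h wh Vb k s) (qb h wh Vb k s) + real H)))
     (real H - real h + 1)"

definition Vund_step :: "nat \<Rightarrow> (nat \<Rightarrow> samp) \<Rightarrow> (nat \<Rightarrow> real) \<Rightarrow> nat \<Rightarrow> real" where
  "Vund_step h wh Vu s = max
     ((\<Sum>k=1..K. alphaK k * (\<Sum>b<B. nu h wh Vu k s b * qu h wh Vu k s b))
      - bfac * (\<Sum>k=1..K. alphaK k * (varp B (nu h wh Vu k s) (qu h wh Vu k s) + real H)))
     0"

text \<open>Vnext w j = (overline V_h, underline V_h) with h = H + 1 - j\<close>
primrec Vnext :: "(nat \<Rightarrow> nat \<Rightarrow> samp) \<Rightarrow> nat \<Rightarrow> (nat \<Rightarrow> real) \<times> (nat \<Rightarrow> real)" where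
  "Vnext w 0 = (\<lambda>s. 0, \<lambda>s. 0)"
| "Vnext w (Suc j) = (Vbar_step (H - j) (w (H - j)) (fst (Vnext w j)),
                      Vund_step (H - j) (w (H - j)) (snd (Vnext w j)))"

definition Vbar :: "(nat \<Rightarrow> nat \<Rightarrow> samp) \<Rightarrow> nat \<Rightarrow> nat \<Rightarrow> real" where
  "Vbar w h = fst (Vnext w (H + 1 - h))"

text \<open>auxiliary empirical value overline V_h^{*,hat nu}, h = H + 1 - j\<close>
primrec Vstar_n :: "(nat \<Rightarrow> nat \<Rightarrow> samp) \<Rightarrow> nat \<Rightarrow> nat \<Rightarrow> real" where
  "Vstar_n w 0 = (\<lambda>s. 0)"
| "Vstar_n w (Suc j) = (\<lambda>s. Max ((\<lambda>a. \<Sum>k=1..K. alphaK k *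
       (r (H - j) s a (fst (fst (w (H - j) k) s a)) + Vstar_n w j (snd (fst (w (H - j) k) s a)))) ` {..<A}))"

definition Vstar :: "(nat \<Rightarrow> nat \<Rightarrow> samp) \<Rightarrow> nat \<Rightarrow> nat \<Rightarrow> real" where
  "Vstar w h = Vstar_n w (H + 1 - h)"

definition samp_dist :: "(nat \<Rightarrow> nat \<Rightarrow> samp) \<Rightarrow> nat \<Rightarrow> nat \<Rightarrow> samp pmf" where
  "samp_dist w h k =
     (let Vb = fst (Vnext w (H - h)); Vu = snd (Vnext w (H - h));
          muP = (\<lambda>s. embed_pmf (\<lambda>a. if a < A then mu h (w h) Vb k s a else 0));
          nuP = (\<lambda>s. embed_pmf (\<lambda>b. if b < B then nu h (w h) Vu k s b else 0))
      in pair_pmf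
        (Pi_pmf {..<S} (\<lambda>_. (0, 0)) (\<lambda>s. Pi_pmf {..<A} (0, 0)
            (\<lambda>a. bind_pmf (nuP s) (\<lambda>b. map_pmf (\<lambda>s'. (b, s')) (P h s a b)))))
        (Pi_pmf {..<S} (\<lambda>_. (0, 0)) (\<lambda>s. Pi_pmf {..<B} (0, 0)
            (\<lambda>b. bind_pmf (muP s) (\<lambda>a. map_pmf (\<lambda>s'. (a, s')) (P h s a b))))))"

fun run :: "(nat \<Rightarrow> nat \<Rightarrow> samp) \<Rightarrow> (nat \<times> nat) list \<Rightarrow> (nat \<Rightarrow> nat \<Rightarrow> samp) pmf" where
  "run w [] = return_pmf w"
| "run w ((h, k) # xs) = bind_pmf (samp_dist w h k) (\<lambda>x. run (w(h := (w h)(k := x))) xs)"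

definition order :: "(nat \<times> nat) list" where
  "order = concat (map (\<lambda>h. map (\<lambda>k. (h, k)) [1..<K+1]) (rev [1..<H+1]))"

definition alg_pmf :: "(nat \<Rightarrow> nat \<Rightarrow> samp) pmf" where
  "alg_pmf = run (\<lambda>h k. ((\<lambda>s a. (0, 0)), (\<lambda>s b. (0, 0)))) order"

end

end

theory Submission
  imports Defs
begin


lemma exp_quad:
  fixes u :: real assumes "\<bar>u\<bar> \<le> 1" shows "exp u \<le> 1 + u + u\<^sup>2"
proof (cases "u \<ge> 0")
  case True then show ?thesis using exp_bound[of u] assms by auto
next
  case False
  define y where "y = - u"
  have y: "0 < y" "y \<le> 1" using False assms by (auto simp: y_def)
  have e: "1 + y + y\<^sup>2 / 2 \<le> exp y" using exp_lower_Taylor_quadratic[of y] y by auto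
  have pos: "0 < 1 + y + y\<^sup>2 / 2" using y zero_le_power2[of y] by linarith
  have "exp u = 1 / exp y" by (simp add: y_def exp_minus field_simps)
  also have "\<dots> \<le> 1 / (1 + y + y\<^sup>2 / 2)" using e pos by (intro divide_left_mono) auto
  also have "\<dots> \<le> 1 - y + y\<^sup>2"
  proof -
    have eq: "(1 - y + y\<^sup>2) * (1 + y + y\<^sup>2 / 2) = 1 + (y^2 + y^3 + y^4) / 2"
      by (simp add: power2_eq_square power3_eq_cube power4_eq_xxxx field_simps)
    have "0 \<le> y^2 + y^3 + y^4" using y by simp
    then have "1 \<le> (1 - y + y\<^sup>2) * (1 + y + y\<^sup>2 / 2)" unfolding eq by simp
    then show ?thesis using pos by (simp add: divide_le_eq)
  qed
  finally show ?thesis by (simp add: y_def)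
qed

lemma exp_cvx: fixes p y :: real assumes "0 \<le> p" "p \<le> 1"
  shows "exp (p * y) \<le> 1 + p * (exp y - 1)"
  using convex_onD[OF exp_convex, of p 0 y] assms by (simp add: algebra_simps)

lemma psi_mono:
  fixes x :: "nat \<Rightarrow> real" and A :: nat
  assumes A: "A \<ge> 1" and l: "0 < l'" "l' \<le> l"
  shows "ln ((\<Sum>a<A. exp (l' * x a)) / A) / l' \<le> ln ((\<Sum>a<A. exp (l * x a)) / A) / l"
proof -
  define M where "M = (\<Sum>a<A. exp (l * x a)) / A"
  have Apos: "real A > 0" using A by auto
  have sp: "(\<Sum>a<A. exp (l * x a)) > 0" using A by (intro sum_pos) (auto simp: lessThan_empty_iff)
  have Mpos: "M > 0" unfolding M_def using sp Apos by auto
  define p where "p = l' / l"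
  have p: "0 < p" "p \<le> 1" using l by (auto simp: p_def)
  have each: "exp (l' * x a) \<le> exp (p * ln M) * (1 - p + p * exp (l * x a) / M)" for a
  proof -
    have "exp (l' * x a) = exp (p * ln M) * exp (p * (l * x a - ln M))"
      using l by (simp add: p_def mult_exp_exp algebra_simps)
    also have "\<dots> \<le> exp (p * ln M) * (1 + p * (exp (l * x a - ln M) - 1))"
      using exp_cvx[of p] p by (intro mult_left_mono) auto
    also have "exp (l * x a - ln M) = exp (l * x a) / M" using Mpos by (simp add: exp_diff)
    finally show ?thesis by (simp add: algebra_simps)
  qed
  have "(\<Sum>a<A. exp (l' * x a)) \<le> (\<Sum>a<A. exp (p * ln M) * (1 - p + p * exp (l * x a) / M))"
    by (intro sum_mono each)
  also have "\<dots> = exp (p * ln M) * (A * (1 - p) + p * (\<Sum>a<A. exp (l * x a)) / M)"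
  proof -
    have "(\<Sum>a<A. exp (p * ln M) * (1 - p + p * exp (l * x a) / M))
        = exp (p * ln M) * (\<Sum>a<A. (1 - p) + (p / M) * exp (l * x a))"
      by (simp add: sum_distrib_left)
    also have "(\<Sum>a<A. (1 - p) + (p / M) * exp (l * x a)) = A * (1 - p) + (p / M) * (\<Sum>a<A. exp (l * x a))"
      by (simp add: sum.distrib sum_distrib_left)
    finally show ?thesis by simp
  qed
  finally have s1: "(\<Sum>a<A. exp (l' * x a)) \<le> exp (p * ln M) * (A * (1 - p) + p * (\<Sum>a<A. exp (l * x a)) / M)" .
  have "p * (\<Sum>a<A. exp (l * x a)) / M = p * A" using Apos sp by (simp add: M_def)
  with s1 have "(\<Sum>a<A. exp (l' * x a)) \<le> exp (p * ln M) * A" by (simp add: algebra_simps)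
  then have "(\<Sum>a<A. exp (l' * x a)) / A \<le> exp (p * ln M)" using Apos by (simp add: divide_le_eq mult.commute)
  moreover have "(\<Sum>a<A. exp (l' * x a)) > 0" using A by (intro sum_pos) (auto simp: lessThan_empty_iff)
  ultimately have "ln ((\<Sum>a<A. exp (l' * x a)) / A) \<le> p * ln M"
    using Apos by (subst ln_exp[symmetric], subst ln_le_cancel_iff) auto
  then have "ln ((\<Sum>a<A. exp (l' * x a)) / A) / l' \<le> p * ln M / l'" using l by (simp add: divide_right_mono)
  also have "p * ln M / l' = ln M / l" using l by (simp add: p_def)
  finally show ?thesis by (simp add: M_def)
qed



lemma T_bound:
  fixes mu g :: "nat \<Rightarrow> real" and A :: nat and lam w H :: real
  assumes mu0: "\<And>a. a < A \<Longrightarrow> mu a \<ge> 0" and mu1: "(\<Sum>a<A. mu a) = 1"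
    and g: "\<And>a. a < A \<Longrightarrow> 0 \<le> g a \<and> g a \<le> H" and lam: "lam > 0" and w: "w \<ge> 0"
  shows "ln (\<Sum>a<A. mu a * exp (lam * (w * g a - (\<Sum>a<A. mu a * (w * g a))))) / lam \<le> w * H"
    and "lam * w * H \<le> 1 \<Longrightarrow> ln (\<Sum>a<A. mu a * exp (lam * (w * g a - (\<Sum>a<A. mu a * (w * g a))))) / lam
           \<le> lam * w\<^sup>2 * (\<Sum>a<A. mu a * (g a - (\<Sum>a'<A. mu a' * g a')) ^ 2)"
proof -
  define m where "m = (\<Sum>a<A. mu a * g a)"
  have wm: "(\<Sum>a<A. mu a * (w * g a)) = w * m" unfolding m_def by (simp add: sum_distrib_left mult.left_commute)
  define u where "u a = lam * w * (g a - m)" for a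
  have ue: "lam * (w * g a - (\<Sum>a<A. mu a * (w * g a))) = u a" for a
    unfolding wm u_def by (simp add: algebra_simps)
  have m0: "0 \<le> m" unfolding m_def using mu0 g by (intro sum_nonneg) auto
  have mH: "m \<le> H"
  proof -
    have "m \<le> (\<Sum>a<A. mu a * H)" unfolding m_def using mu0 g by (intro sum_mono mult_left_mono) auto
    also have "\<dots> = H" using mu1 by (simp add: sum_distrib_right[symmetric])
    finally show ?thesis .
  qed
  have lw: "lam * w \<ge> 0" using lam w by simp
  have su: "(\<Sum>a<A. mu a * u a) = 0"
  proof -
    have "(\<Sum>a<A. mu a * u a) = lam * w * ((\<Sum>a<A. mu a * g a) - m * (\<Sum>a<A. mu a))"
      unfolding u_def by (simp add: sum_distrib_left sum_distrib_right sum_subtractf algebra_simps)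
    then show ?thesis using mu1 by (simp add: m_def)
  qed
  have S1: "(\<Sum>a<A. mu a * exp (u a)) \<ge> 1"
  proof -
    have "(\<Sum>a<A. mu a * (1 + u a)) \<le> (\<Sum>a<A. mu a * exp (u a))"
      using mu0 by (intro sum_mono mult_left_mono) auto
    moreover have "(\<Sum>a<A. mu a * (1 + u a)) = 1" using mu1 su by (simp add: distrib_left sum.distrib)
    ultimately show ?thesis by simp
  qed
  show "ln (\<Sum>a<A. mu a * exp (lam * (w * g a - (\<Sum>a<A. mu a * (w * g a))))) / lam \<le> w * H"
  proof -
    have "(\<Sum>a<A. mu a * exp (u a)) \<le> (\<Sum>a<A. mu a * exp (lam * w * H))"
    proof (intro sum_mono mult_left_mono)
      fix a assume a: "a \<in> {..<A}"
      have "g a - m \<le> H" using g[of a] a m0 by auto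
      then have "u a \<le> lam * w * H" unfolding u_def using lw by (intro mult_left_mono) auto
      then show "exp (u a) \<le> exp (lam * w * H)" by simp
      show "0 \<le> mu a" using mu0 a by auto
    qed
    also have "\<dots> = exp (lam * w * H)" using mu1 by (simp add: sum_distrib_right[symmetric])
    finally have "ln (\<Sum>a<A. mu a * exp (u a)) \<le> lam * w * H" using S1
      by (metis exp_le_cancel_iff exp_ln less_le_trans zero_less_one)
    then show ?thesis unfolding ue using lam by (simp add: divide_le_eq mult.commute mult.left_commute)
  qed
  assume small: "lam * w * H \<le> 1"
  define V where "V = (\<Sum>a<A. mu a * (g a - m) ^ 2)"
  have "(\<Sum>a<A. mu a * exp (u a)) \<le> (\<Sum>a<A. mu a * (1 + u a + (u a)\<^sup>2))"
  proof (intro sum_mono mult_left_mono)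
    fix a assume a: "a \<in> {..<A}"
    have "\<bar>g a - m\<bar> \<le> H" using g[of a] a m0 mH by auto
    moreover have "\<bar>u a\<bar> = lam * w * \<bar>g a - m\<bar>" unfolding u_def using lam w by (simp add: abs_mult)
    ultimately have "\<bar>u a\<bar> \<le> lam * w * H" using lw by (simp add: mult_left_mono)
    then show "exp (u a) \<le> 1 + u a + (u a)\<^sup>2" using small by (intro exp_quad) auto
    show "0 \<le> mu a" using mu0 a by auto
  qed
  also have "\<dots> = 1 + (lam * w)\<^sup>2 * V"
  proof -
    have "(\<Sum>a<A. mu a * (1 + u a + (u a)\<^sup>2)) = (\<Sum>a<A. mu a) + (\<Sum>a<A. mu a * u a) + (\<Sum>a<A. mu a * (u a)\<^sup>2)"
      by (simp add: distrib_left sum.distrib)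
    also have "(\<Sum>a<A. mu a * (u a)\<^sup>2) = (lam * w)\<^sup>2 * V"
      unfolding V_def u_def by (simp add: sum_distrib_left power_mult_distrib mult_ac)
    finally show ?thesis using mu1 su by simp
  qed
  finally have "ln (\<Sum>a<A. mu a * exp (u a)) \<le> (lam * w)\<^sup>2 * V" using S1
    by (smt (verit) ln_add_one_self_le_self ln_le_cancel_iff)
  then have "ln (\<Sum>a<A. mu a * exp (u a)) / lam \<le> (lam * w)\<^sup>2 * V / lam" using lam by (intro divide_right_mono) auto
  also have "\<dots> = lam * w\<^sup>2 * V" using lam by (simp add: power2_eq_square)
  finally show "ln (\<Sum>a<A. mu a * exp (lam * (w * g a - (\<Sum>a<A. mu a * (w * g a))))) / lam
           \<le> lam * w\<^sup>2 * (\<Sum>a<A. mu a * (g a - (\<Sum>a'<A. mu a' * g a')) ^ 2)"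
    unfolding ue V_def m_def .
qed



definition Psi :: "nat \<Rightarrow> (nat \<Rightarrow> real) \<Rightarrow> real \<Rightarrow> real" where
  "Psi A x l = ln ((\<Sum>a<A. exp (l * x a)) / A) / l"

lemma Psi_zero: "A \<ge> 1 \<Longrightarrow> Psi A (\<lambda>a. 0) l = 0"
  by (simp add: Psi_def)

lemma Psi_lower: assumes "A \<ge> 1" "l > 0" "a < A"
  shows "x a - ln A / l \<le> Psi A x l"
proof -
  have "exp (l * x a) \<le> (\<Sum>a<A. exp (l * x a))"
    using assms by (intro member_le_sum) auto
  moreover have "0 < (\<Sum>a<A. exp (l * x a))" using assms by (intro sum_pos) (auto simp: lessThan_empty_iff)
  ultimately have "ln (exp (l * x a) / A) \<le> ln ((\<Sum>a<A. exp (l * x a)) / A)"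
    using assms by (subst ln_le_cancel_iff) (auto intro: divide_right_mono)
  moreover have "ln (exp (l * x a) / A) = l * x a - ln A" using assms by (simp add: ln_div)
  ultimately have "l * x a - ln A \<le> ln ((\<Sum>a<A. exp (l * x a)) / A)" by simp
  then have "(l * x a - ln A) / l \<le> ln ((\<Sum>a<A. exp (l * x a)) / A) / l" using assms by (intro divide_right_mono) auto
  moreover have "(l * x a - ln A) / l = x a - ln A / l" using assms by (simp add: field_simps)
  ultimately show ?thesis unfolding Psi_def by simp
qed

lemma Psi_step:
  fixes x y mu :: "nat \<Rightarrow> real"
  assumes A: "A \<ge> 1" and l: "l > 0"
    and mu: "\<And>a. mu a = exp (l * x a) / (\<Sum>a'<A. exp (l * x a'))"
  shows "Psi A (\<lambda>a. x a + y a) l = Psi A x l + (\<Sum>a<A. mu a * y a)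
     + ln (\<Sum>a<A. mu a * exp (l * (y a - (\<Sum>a<A. mu a * y a)))) / l"
proof -
  define Z where "Z = (\<Sum>a'<A. exp (l * x a'))"
  define m where "m = (\<Sum>a<A. mu a * y a)"
  have Z: "Z > 0" unfolding Z_def using A by (intro sum_pos) (auto simp: lessThan_empty_iff)
  have "(\<Sum>a<A. exp (l * (x a + y a))) = (\<Sum>a<A. Z * (mu a * exp (l * y a)))"
    using Z by (intro sum.cong) (auto simp: mu Z_def[symmetric] distrib_left exp_add)
  also have "\<dots> = Z * exp (l * m) * (\<Sum>a<A. mu a * exp (l * (y a - m)))"
    by (simp add: sum_distrib_left right_diff_distrib exp_diff mult.assoc)
  finally have eq: "(\<Sum>a<A. exp (l * (x a + y a))) = Z * exp (l * m) * (\<Sum>a<A. mu a * exp (l * (y a - m)))" .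
  have S: "(\<Sum>a<A. mu a * exp (l * (y a - m))) > 0"
    using A Z by (intro sum_pos) (auto simp: lessThan_empty_iff mu Z_def[symmetric])
  have "ln ((\<Sum>a<A. exp (l * (x a + y a))) / A) = ln (Z / A) + l * m + ln (\<Sum>a<A. mu a * exp (l * (y a - m)))"
    unfolding eq using Z S A by (simp add: ln_mult ln_div)
  then show ?thesis using l unfolding Psi_def Z_def[symmetric] m_def[symmetric] by (simp add: field_simps)
qed

lemma ftrl_regret:
  fixes A n :: nat and g mu :: "nat \<Rightarrow> nat \<Rightarrow> real" and w lam :: "nat \<Rightarrow> real"
  defines "G \<equiv> \<lambda>k a. \<Sum>i=1..k. w i * g i a"
  assumes A: "A \<ge> 1" and lpos: "\<And>i. 1 \<le> i \<Longrightarrow> i \<le> n \<Longrightarrow> lam i > 0"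
    and lmono: "\<And>i. 2 \<le> i \<Longrightarrow> i \<le> n \<Longrightarrow> lam i \<le> lam (i - 1)"
    and mu: "\<And>k a. 1 \<le> k \<Longrightarrow> k \<le> n \<Longrightarrow> mu k a = exp (lam k * G (k - 1) a) / (\<Sum>a'<A. exp (lam k * G (k - 1) a'))"
    and n: "n \<ge> 1" and a: "a < A"
  shows "G n a \<le> ln A / lam n + (\<Sum>i=1..n. w i * (\<Sum>a<A. mu i a * g i a)
          + ln (\<Sum>a<A. mu i a * exp (lam i * (w i * g i a - (\<Sum>a<A. mu i a * (w i * g i a))))) / lam i)"
proof -
  define R where "R i = w i * (\<Sum>a<A. mu i a * g i a)
          + ln (\<Sum>a<A. mu i a * exp (lam i * (w i * g i a - (\<Sum>a<A. mu i a * (w i * g i a))))) / lam i" for i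
  have step: "Psi A (G k) (lam k) = Psi A (G (k - 1)) (lam k) + R k" if k: "1 \<le> k" "k \<le> n" for k
  proof -
    have Gk: "G k = (\<lambda>a. G (k - 1) a + w k * g k a)"
      using k unfolding G_def by (cases k) (auto simp: sum.cl_ivl_Suc fun_eq_iff)
    show ?thesis
      unfolding Gk R_def
      by (subst Psi_step[OF A lpos[OF k] mu[OF k]]) (simp add: sum_distrib_left mult.left_commute)
  qed
  have ind: "k \<le> n \<longrightarrow> 1 \<le> k \<longrightarrow> Psi A (G k) (lam k) \<le> (\<Sum>i=1..k. R i)" for k
  proof (induction k)
    case 0 then show ?case by simp
  next
    case (Suc k)
    show ?case
    proof (intro impI)
      assume h: "Suc k \<le> n" "1 \<le> Suc k"
      show "Psi A (G (Suc k)) (lam (Suc k)) \<le> (\<Sum>i=1..Suc k. R i)"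
      proof (cases "k = 0")
        case True
        have "G 0 = (\<lambda>a. 0)" unfolding G_def by simp
        then show ?thesis using step[of 1] h True A by (simp add: Psi_zero)
      next
        case False
        have "Psi A (G k) (lam (Suc k)) \<le> Psi A (G k) (lam k)"
          using lpos[of "Suc k"] lmono[of "Suc k"] h False unfolding Psi_def
          by (intro psi_mono A) auto
        then show ?thesis using step[of "Suc k"] h Suc.IH False by simp
      qed
    qed
  qed
  have "G n a - ln A / lam n \<le> Psi A (G n) (lam n)"
    using Psi_lower[OF A lpos[of n] a] n by simp
  then show ?thesis using ind[of n] n unfolding R_def by simp
qed



lemma prod_split_ivl:
  fixes f :: "nat \<Rightarrow> real"
  shows "1 \<le> i \<Longrightarrow> i \<le> n \<Longrightarrow> (\<Prod>j\<in>{2..n}. f j) = (\<Prod>j\<in>{2..i}. f j) * (\<Prod>j\<in>{i+1..n}. f j)"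
proof (induction n)
  case 0 then show ?case by simp
next
  case (Suc n)
  show ?case
  proof (cases "i = Suc n")
    case True then show ?thesis by simp
  next
    case False
    then have "i \<le> n" using Suc by simp
    then show ?thesis using Suc by (simp add: prod.cl_ivl_Suc)
  qed
qed

lemma div_rearr: "(a::real) / (b * c) * x = a / c * (x / b)" by (simp add: field_simps)

lemma prod_exp_bound:
  fixes x :: "nat \<Rightarrow> real"
  assumes "\<And>j. j \<in> J \<Longrightarrow> 0 \<le> 1 - x j"
  shows "(\<Prod>j\<in>J. 1 - x j) \<le> exp (- (\<Sum>j\<in>J. x j))"
proof -
  have "(\<Prod>j\<in>J. 1 - x j) \<le> (\<Prod>j\<in>J. exp (- x j))"
    using assms by (intro prod_mono) (auto, smt (verit) exp_ge_add_one_self)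
  also have "\<dots> = exp (- (\<Sum>j\<in>J. x j))" by (cases "finite J") (simp_all add: exp_sum sum_negf[symmetric])
  finally show ?thesis .
qed

lemma aux1: fixes x c :: real assumes "x \<ge> 1" "c \<ge> 1"
  shows "(1 - c/(x+c))\<^sup>2 / (c/(x+c)) \<le> 1 / (c / (x - 1 + c))"
proof -
  have p: "x + c > 0" "x - 1 + c > 0" "c > 0" using assms by auto
  have l: "(1 - c/(x+c))\<^sup>2 / (c/(x+c)) = x\<^sup>2 / (c * (x + c))"
  proof -
    have "1 - c/(x+c) = x/(x+c)" using p by (simp add: field_simps)
    then have "(1 - c/(x+c))\<^sup>2 / (c/(x+c)) = (x\<^sup>2 / (x+c)\<^sup>2) * ((x+c)/c)" using p by (simp add: power_divide)
    also have "\<dots> = x\<^sup>2 / (c * (x + c))" using p by (simp add: power2_eq_square)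
    finally show ?thesis .
  qed
  have r: "1 / (c / (x - 1 + c)) = (x - 1 + c) / c" using p by simp
  have "x\<^sup>2 \<le> (x + c) * (x - 1 + c)"
  proof -
    have "(x + c) * (x - 1 + c) - x\<^sup>2 = x * (2*c - 1) + c * (c - 1)"
      by (simp add: algebra_simps power2_eq_square)
    moreover have "x * (2*c - 1) \<ge> 0" "c * (c - 1) \<ge> 0" using assms by auto
    ultimately show ?thesis by linarith
  qed
  then have "x\<^sup>2 / (c * (x + c)) \<le> (x + c) * (x - 1 + c) / (c * (x + c))"
    using p by (intro divide_right_mono) auto
  also have "\<dots> = (x - 1 + c) / c" using p
    by (subst mult.commute[of c], subst nonzero_mult_divide_mult_cancel_left) auto
  finally show ?thesis using l r by simp
qed

lemma pure_Q1:
  fixes lk ca c Kr Hr x :: real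
  assumes lk: "lk > 0" and ca: "ca \<ge> 24" and c: "c = ca * lk" and K: "Kr \<ge> 2" and H: "Hr \<ge> 1"
    and x1: "x \<ge> Kr / 4" and x2: "x \<le> Kr" and cK: "c \<le> Kr" and x0: "x \<ge> 1"
  shows "lk / ((c / (x - 1 + c)) * Hr) * (c / x)\<^sup>2 \<le> 32 * ca * lk\<^sup>2 / (Hr * Kr)"
proof -
  have cp: "c > 0" using c lk ca by simp
  have e: "lk / ((c / (x - 1 + c)) * Hr) * (c / x)\<^sup>2 = (lk * (x - 1 + c) * c) / (Hr * x\<^sup>2)"
    using cp x0 H by (simp add: field_simps power2_eq_square)
  have "(lk * (x - 1 + c) * c) / (Hr * x\<^sup>2) \<le> (lk * (2 * Kr) * c) / (Hr * (Kr\<^sup>2 / 16))"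
  proof (rule frac_le)
    show "0 \<le> lk * (2 * Kr) * c" using lk K cp by simp
    show "lk * (x - 1 + c) * c \<le> lk * (2 * Kr) * c" using lk cp x2 cK by (intro mult_right_mono mult_left_mono) auto
    show "0 < Hr * (Kr\<^sup>2 / 16)" using H K by simp
    have "Kr\<^sup>2 / 16 \<le> x\<^sup>2"
    proof -
      have "(Kr / 4)\<^sup>2 \<le> x\<^sup>2" using x1 K by (intro power_mono) auto
      then show ?thesis by (simp add: power_divide)
    qed
    then show "Hr * (Kr\<^sup>2 / 16) \<le> Hr * x\<^sup>2" using H by (intro mult_left_mono) auto
  qed
  also have "\<dots> = 32 * ca * lk\<^sup>2 / (Hr * Kr)" using K H c by (simp add: field_simps power2_eq_square)
  finally show ?thesis using e by simp
qed
lemma pow_mono_LL: fixes l LL :: real assumes "0 \<le> l" "l \<le> LL" "LL \<ge> 1"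
  shows "l\<^sup>2 \<le> LL^3" "l\<^sup>2 \<le> LL^4"
proof -
  have a: "l\<^sup>2 \<le> LL\<^sup>2" using assms by (intro power_mono) auto
  have "LL\<^sup>2 \<le> LL^3" "LL^3 \<le> LL^4" using assms by (intro power_increasing; simp)+
  then show "l\<^sup>2 \<le> LL^3" "l\<^sup>2 \<le> LL^4" using a by linarith+
qed

lemma pure_fin1: fixes lk LL ca cb Kr Hr :: real
  assumes "0 \<le> lk" "lk \<le> LL" "LL \<ge> 1" "ca \<ge> 24" "cb \<ge> 2 * ca" "Kr > 0" "Hr > 0"
  shows "32 * ca * lk\<^sup>2 / (Hr * Kr) \<le> cb\<^sup>2 * (LL^3 / (Kr * Hr))"
proof -
  have "32 * ca \<le> cb\<^sup>2"
  proof -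
    have "32 * ca \<le> (2 * ca)\<^sup>2" using assms by (simp add: power2_eq_square)
    also have "\<dots> \<le> cb\<^sup>2" using assms by (intro power_mono) auto
    finally show ?thesis .
  qed
  moreover have "lk\<^sup>2 \<le> LL^3" using pow_mono_LL assms by auto
  ultimately have "32 * ca * lk\<^sup>2 \<le> cb\<^sup>2 * LL^3" using assms by (intro mult_mono) auto
  then show ?thesis using assms by (simp add: divide_right_mono mult.commute)
qed

lemma pure_fin2: fixes lk LL ca Kr Hr :: real
  assumes "0 \<le> lk" "lk \<le> LL" "LL \<ge> 1" "ca \<ge> 24" "32 * ca * Hr * LL^4 \<le> Kr" "Kr > 0" "Hr > 0"
  shows "32 * ca * lk\<^sup>2 / (Hr * Kr) * Hr\<^sup>2 \<le> 1"
proof -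
  have "lk\<^sup>2 \<le> LL^4" using pow_mono_LL assms by auto
  then have "32 * ca * Hr * lk\<^sup>2 \<le> 32 * ca * Hr * LL^4" using assms by (intro mult_left_mono) auto
  then have "32 * ca * Hr * lk\<^sup>2 \<le> Kr" using assms by linarith
  moreover have "32 * ca * lk\<^sup>2 / (Hr * Kr) * Hr\<^sup>2 = 32 * ca * Hr * lk\<^sup>2 / Kr" using assms
    by (simp add: field_simps power2_eq_square)
  ultimately show ?thesis using assms by (simp add: divide_le_eq)
qed

lemma pure_Q2: fixes la lk c ca Kr Hr :: real
  assumes "0 \<le> la" "lk > 0" "c = ca * lk" "c \<ge> 2" "Kr \<ge> 2" "Hr \<ge> 1" "ca \<ge> 24"
  shows "la\<^sup>2 / (lk / ((c / (Kr - 2 + c)) * Hr)) \<le> la\<^sup>2 * ca * Hr / Kr"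
proof -
  have cp: "c > 0" "ca > 0" using assms by auto
  have "la\<^sup>2 / (lk / ((c / (Kr - 2 + c)) * Hr)) = la\<^sup>2 * ca * Hr / (Kr - 2 + c)"
  proof -
    have D: "Kr - 2 + c > 0" using assms by simp
    have "la\<^sup>2 / (lk / ((c / (Kr - 2 + c)) * Hr)) = la\<^sup>2 * ((c / (Kr - 2 + c)) * Hr) / lk" by simp
    also have "\<dots> = la\<^sup>2 * ((ca * lk) * Hr) / ((Kr - 2 + c) * lk)" using assms D by simp
    also have "\<dots> = la\<^sup>2 * ca * Hr / (Kr - 2 + c)" using assms(2) D by (simp add: mult.assoc mult.left_commute[of lk])
    finally show ?thesis .
  qed
  also have "\<dots> \<le> la\<^sup>2 * ca * Hr / Kr" using assms cp by (intro divide_left_mono) auto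
  finally show ?thesis .
qed

lemma pure_fin3: fixes la LL ca cb Kr Hr :: real
  assumes "0 \<le> la" "la \<le> LL" "LL \<ge> 1" "ca \<ge> 24" "cb \<ge> 2 * ca" "Kr > 0" "Hr > 0"
  shows "la\<^sup>2 * ca * Hr / Kr \<le> cb\<^sup>2 * (LL^3 / (Kr * Hr)) * Hr\<^sup>2 / 4"
proof -
  have "4 * ca \<le> cb\<^sup>2"
  proof -
    have "4 * ca \<le> (2 * ca)\<^sup>2" using assms by (simp add: power2_eq_square)
    also have "\<dots> \<le> cb\<^sup>2" using assms by (intro power_mono) auto
    finally show ?thesis .
  qed
  moreover have "la\<^sup>2 \<le> LL^3" using pow_mono_LL assms by auto
  ultimately have "la\<^sup>2 * (4 * ca) \<le> LL^3 * cb\<^sup>2" using assms by (intro mult_mono) auto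
  then have "la\<^sup>2 * ca * Hr / Kr \<le> LL^3 * cb\<^sup>2 * Hr / (4 * Kr)" using assms
    by (simp add: field_simps)
  also have "\<dots> = cb\<^sup>2 * (LL^3 / (Kr * Hr)) * Hr\<^sup>2 / 4" using assms by (simp add: field_simps power2_eq_square)
  finally show ?thesis .
qed

lemma pure_bf: fixes Kr Hr cb LL :: real
  assumes "Kr \<ge> 1" "1 \<le> Hr" "Hr \<le> Kr" "cb \<ge> 2" "LL \<ge> 1"
  shows "(2 / Kr)\<^sup>2 \<le> cb\<^sup>2 * (LL^3 / (Kr * Hr))"
proof -
  have "(2 / Kr)\<^sup>2 = 4 / (Kr * Kr)" by (simp add: power2_eq_square)
  also have "\<dots> \<le> 4 / (Kr * Hr)"
  proof (rule divide_left_mono)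
    show "Kr * Hr \<le> Kr * Kr" using assms by (intro mult_left_mono) auto
  qed (use assms in auto)
  also have "\<dots> \<le> cb\<^sup>2 * LL^3 / (Kr * Hr)"
  proof (intro divide_right_mono)
    have "(2::real)\<^sup>2 \<le> cb\<^sup>2" using assms by (intro power_mono) auto
    moreover have "1 \<le> LL^3" using assms by simp
    ultimately have "4 * 1 \<le> cb\<^sup>2 * LL^3" by (intro mult_mono) auto
    then show "4 \<le> cb\<^sup>2 * LL^3" by simp
    show "0 \<le> Kr * Hr" using assms by simp
  qed
  finally show ?thesis by simp
qed
lemma ln4: "ln (4::real) \<ge> 1"
proof -
  have "exp 1 \<le> (4::real)" using exp_le by simp
  then have "ln (exp 1) \<le> ln (4::real)" by (subst ln_le_cancel_iff) auto
  then show ?thesis by simp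
qed
lemma ln2: "ln (2::real) \<ge> 1/2"
proof -
  have "ln (1 / 2::real) \<le> 1 / 2 - 1" by (intro ln_le_minus_one) auto
  moreover have "ln (1 / 2::real) = - ln 2" by (simp add: ln_div)
  ultimately show ?thesis by linarith
qed

context nashq begin

definition cc :: real where "cc = c_alpha * ln (real K)"
definition PP :: "nat \<Rightarrow> real" where "PP k = (\<Prod>j\<in>{2..k}. 1 - alpha j)"
definition ww :: "nat \<Rightarrow> real" where "ww i = alpha i / PP i"
definition lam :: "nat \<Rightarrow> real" where "lam k = eta (max k 2) * PP (max k 2 - 1)"

lemma alpha_eq: "alpha k = cc / (real k - 1 + cc)"
  by (simp add: alpha_def cc_def)

lemma lnK_half: assumes "K \<ge> 2" shows "ln (real K) \<ge> 1/2"
proof -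
  have "ln (1 / real K) \<le> 1 / real K - 1" using assms by (intro ln_le_minus_one) auto
  moreover have "1 / real K \<le> 1/2" using assms by (simp add: divide_simps)
  moreover have "ln (1 / real K) = - ln (real K)" using assms by (simp add: ln_div)
  ultimately show ?thesis by linarith
qed

lemma cc_ge: assumes "K \<ge> 2" "c_alpha \<ge> 24" shows "cc \<ge> 12"
proof -
  have "c_alpha * (1/2) \<le> c_alpha * ln (real K)" using lnK_half[OF assms(1)] assms by (intro mult_left_mono) auto
  then show ?thesis using assms unfolding cc_def by linarith
qed

lemma alpha_1: assumes "K \<ge> 2" "c_alpha \<ge> 24" shows "alpha 1 = 1"
  using cc_ge[OF assms] by (simp add: alpha_eq)

lemma alpha_pos: assumes "K \<ge> 2" "c_alpha \<ge> 24" "k \<ge> 1" shows "0 < alpha k" "alpha k \<le> 1"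
proof -
  have k: "real k - 1 \<ge> 0" using assms by simp
  have c: "cc > 0" using cc_ge[OF assms(1,2)] by simp
  show "0 < alpha k" using k c by (simp add: alpha_eq)
  show "alpha k \<le> 1" using k c by (simp add: alpha_eq divide_le_eq)
qed

lemma alpha_lt1: assumes "K \<ge> 2" "c_alpha \<ge> 24" "k \<ge> 2" shows "alpha k < 1"
proof -
  have k: "real k - 1 > 0" using assms by simp
  have c: "cc > 0" using cc_ge[OF assms(1,2)] by simp
  show ?thesis using k c by (simp add: alpha_eq divide_less_eq)
qed

lemma PP_pos: assumes "K \<ge> 2" "c_alpha \<ge> 24" shows "PP k > 0"
  unfolding PP_def using alpha_lt1[OF assms] by (intro prod_pos) auto

lemma PP_Suc: assumes "k \<ge> 1" shows "PP (Suc k) = (1 - alpha (Suc k)) * PP k"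
  unfolding PP_def using assms by (simp add: prod.cl_ivl_Suc)

lemma PP_1: "PP 1 = 1" "PP 0 = 1" "PP (Suc 0) = 1" by (simp_all add: PP_def)

lemma Qb_eq: assumes "K \<ge> 2" "c_alpha \<ge> 24"
  shows "Qb h wh Vb k s a = PP k * (\<Sum>i=1..k. ww i * qb h wh Vb i s a)"
proof (induction k)
  case 0 then show ?case by simp
next
  case (Suc k)
  have PPk: "PP k > 0" "PP (Suc k) > 0" using PP_pos[OF assms] by auto
  show ?case
  proof (cases "k = 0")
    case True then show ?thesis by (simp add: PP_1 ww_def)
  next
    case False
    have "Qb h wh Vb (Suc k) s a = (1 - alpha (Suc k)) * PP k * (\<Sum>i=1..k. ww i * qb h wh Vb i s a)
        + alpha (Suc k) * qb h wh Vb (Suc k) s a" using Suc by simp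
    also have "\<dots> = PP (Suc k) * (\<Sum>i=1..k. ww i * qb h wh Vb i s a) + PP (Suc k) * (ww (Suc k) * qb h wh Vb (Suc k) s a)"
    proof -
      have e1: "PP (Suc k) * (ww (Suc k) * qb h wh Vb (Suc k) s a) = alpha (Suc k) * qb h wh Vb (Suc k) s a"
        using PPk by (simp add: ww_def)
      have e2: "(1 - alpha (Suc k)) * PP k = PP (Suc k)" using PP_Suc[of k] False by simp
      show ?thesis by (simp only: e1 e2)
    qed
    also have "\<dots> = PP (Suc k) * (\<Sum>i=1..Suc k. ww i * qb h wh Vb i s a)"
      by (simp add: sum.cl_ivl_Suc distrib_left)
    finally show ?thesis .
  qed
qed

lemma alphaK_eq: assumes "K \<ge> 2" "c_alpha \<ge> 24" "1 \<le> i" "i \<le> K"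
  shows "alphaK i = PP K * ww i"
proof -
  have "PP K = PP i * (\<Prod>j\<in>{i+1..K}. 1 - alpha j)" unfolding PP_def using prod_split_ivl[OF assms(3,4)] by simp
  then show ?thesis using PP_pos[OF assms(1,2), of i] unfolding alphaK_def ww_def by (simp add: field_simps)
qed

lemma alphaK_sum: assumes "K \<ge> 2" "c_alpha \<ge> 24"
  shows "(\<Sum>i=1..K. alphaK i) = 1"
proof -
  have "n \<ge> 1 \<Longrightarrow> PP n * (\<Sum>i=1..n. ww i) = 1" for n
  proof (induction n)
    case 0 then show ?case by simp
  next
    case (Suc n)
    show ?case
    proof (cases "n = 0")
      case True then show ?thesis using alpha_1[OF assms] by (simp add: PP_1 ww_def)
    next
      case False
      have e1: "PP (Suc n) * (\<Sum>i=1..Suc n. ww i) = PP (Suc n) * (\<Sum>i=1..n. ww i) + PP (Suc n) * ww (Suc n)"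
        by (simp add: sum.cl_ivl_Suc distrib_left)
      have e2: "PP (Suc n) * ww (Suc n) = alpha (Suc n)" using PP_pos[OF assms, of "Suc n"] by (simp add: ww_def)
      have e3: "PP (Suc n) * (\<Sum>i=1..n. ww i) = (1 - alpha (Suc n)) * (PP n * (\<Sum>i=1..n. ww i))"
        using PP_Suc[of n] False by simp
      have "PP (Suc n) * (\<Sum>i=1..Suc n. ww i) = (1 - alpha (Suc n)) * (PP n * (\<Sum>i=1..n. ww i)) + alpha (Suc n)"
        using e1 e2 e3 by linarith
      then show ?thesis using Suc False by simp
    qed
  qed
  then have "PP K * (\<Sum>i=1..K. ww i) = 1" using assms by simp
  moreover have "(\<Sum>i=1..K. alphaK i) = PP K * (\<Sum>i=1..K. ww i)"
    by (simp add: sum_distrib_left alphaK_eq[OF assms])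
  ultimately show ?thesis by simp
qed

lemma alphaK_nonneg: assumes "K \<ge> 2" "c_alpha \<ge> 24" "1 \<le> i" "i \<le> K" shows "alphaK i \<ge> 0"
  using alphaK_eq[OF assms] PP_pos[OF assms(1,2)] alpha_pos[OF assms(1,2,3)] unfolding ww_def
  by (auto intro!: divide_nonneg_pos mult_nonneg_nonneg less_imp_le)


lemma eta_sq: assumes "K \<ge> 2" "c_alpha \<ge> 24" "H \<ge> 1" "k \<ge> 2"
  shows "(eta k)\<^sup>2 = ln (real K) / (alpha (k - 1) * real H)" "eta k > 0"
proof -
  have a: "alpha (k - 1) > 0" using alpha_pos[OF assms(1,2), of "k - 1"] assms by auto
  have l: "ln (real K) > 0" using assms by simp
  show "(eta k)\<^sup>2 = ln (real K) / (alpha (k - 1) * real H)" unfolding eta_def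
    using a l assms by (intro real_sqrt_pow2) auto
  show "eta k > 0" unfolding eta_def using a l assms by auto
qed

lemma eta_step: assumes "K \<ge> 2" "c_alpha \<ge> 24" "H \<ge> 1" "j \<ge> 2"
  shows "eta (Suc j) * (1 - alpha j) \<le> eta j"
proof -
  have a1: "alpha j < 1" using alpha_lt1[OF assms(1,2,4)] .
  have aj: "alpha j > 0" using alpha_pos[OF assms(1,2), of j] assms by auto
  have aj1: "alpha (j - 1) > 0" using alpha_pos[OF assms(1,2), of "j - 1"] assms by auto
  define D where "D = ln (real K) / real H"
  have D: "D \<ge> 0" unfolding D_def using assms by simp
  have e1: "(eta (Suc j) * (1 - alpha j))\<^sup>2 = D * ((1 - alpha j)\<^sup>2 / alpha j)"
  proof -
    have "(eta (Suc j) * (1 - alpha j))\<^sup>2 = (eta (Suc j))\<^sup>2 * (1 - alpha j)\<^sup>2" by (simp add: power_mult_distrib)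
    also have "\<dots> = ln (real K) / (alpha j * real H) * (1 - alpha j)\<^sup>2"
      using eta_sq(1)[OF assms(1,2,3), of "Suc j"] assms by simp
    also have "\<dots> = D * ((1 - alpha j)\<^sup>2 / alpha j)" unfolding D_def by (rule div_rearr)
    finally show ?thesis .
  qed
  have e2: "(eta j)\<^sup>2 = D * (1 / alpha (j - 1))"
  proof -
    have "(eta j)\<^sup>2 = ln (real K) / (alpha (j - 1) * real H) * 1" using eta_sq(1)[OF assms(1,2,3,4)] by simp
    also have "\<dots> = D * (1 / alpha (j - 1))" unfolding D_def by (rule div_rearr)
    finally show ?thesis .
  qed
  have c: "cc \<ge> 1" using cc_ge[OF assms(1,2)] by simp
  have x: "real j - 1 \<ge> 1" using assms by simp
  have "(1 - alpha j)\<^sup>2 / alpha j \<le> 1 / alpha (j - 1)"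
  proof -
    have aj_eq: "alpha j = cc / ((real j - 1) + cc)" by (simp add: alpha_eq)
    have aj1_eq: "alpha (j - 1) = cc / ((real j - 1) - 1 + cc)" using assms by (simp add: alpha_eq of_nat_diff)
    show ?thesis unfolding aj_eq aj1_eq by (rule aux1[OF x c])
  qed
  then have "(eta (Suc j) * (1 - alpha j))\<^sup>2 \<le> (eta j)\<^sup>2" unfolding e1 e2 using D by (intro mult_left_mono)
  then show ?thesis using eta_sq(2)[OF assms] power2_le_imp_le by (meson less_imp_le)
qed

lemma lam_pos: assumes "K \<ge> 2" "c_alpha \<ge> 24" "H \<ge> 1" shows "lam k > 0"
  unfolding lam_def using eta_sq(2)[OF assms, of "max k 2"] PP_pos[OF assms(1,2)] by simp

lemma lam_mono: assumes "K \<ge> 2" "c_alpha \<ge> 24" "H \<ge> 1" "k \<ge> 2" shows "lam k \<le> lam (k - 1)"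
proof (cases "k = 2")
  case True then show ?thesis by (simp add: lam_def numeral_2_eq_2)
next
  case False
  then obtain j where j: "k = Suc j" "j \<ge> 2" using assms by (cases k) auto
  have "lam k = eta (Suc j) * ((1 - alpha j) * PP (j - 1))"
    using j PP_Suc[of "j - 1"] by (simp add: lam_def)
  also have "\<dots> = (eta (Suc j) * (1 - alpha j)) * PP (j - 1)" by simp
  also have "\<dots> \<le> eta j * PP (j - 1)"
    using eta_step[OF assms(1,2,3) j(2)] PP_pos[OF assms(1,2)] by (intro mult_right_mono) (auto intro: less_imp_le)
  also have "\<dots> = lam (k - 1)" using j by (simp add: lam_def)
  finally show ?thesis .
qed

lemma mu_eq: assumes "K \<ge> 2" "c_alpha \<ge> 24" "A \<ge> 1" "1 \<le> k"
  shows "mu h wh Vb k s a = exp (lam k * (\<Sum>i=1..k-1. ww i * qb h wh Vb i s a)) /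
      (\<Sum>a'<A. exp (lam k * (\<Sum>i=1..k-1. ww i * qb h wh Vb i s a')))"
proof (cases "k = 1")
  case True then show ?thesis by (simp add: mu_def)
next
  case False
  then have "k \<ge> 2" using assms by simp
  then have lk: "lam k = eta k * PP (k - 1)" by (simp add: lam_def max_def)
  have q: "eta k * Qb h wh Vb (k - 1) s a' = lam k * (\<Sum>i=1..k-1. ww i * qb h wh Vb i s a')" for a'
    unfolding lk Qb_eq[OF assms(1,2)] by (simp only: mult.assoc)
  show ?thesis using \<open>k \<ge> 2\<close> unfolding mu_def q by simp
qed


definition TT :: "nat \<Rightarrow> (nat \<Rightarrow> samp) \<Rightarrow> (nat \<Rightarrow> real) \<Rightarrow> nat \<Rightarrow> nat \<Rightarrow> real" where
  "TT h wh Vb i s = ln (\<Sum>a<A. mu h wh Vb i s a * exp (lam i * (ww i * qb h wh Vb i s a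
        - (\<Sum>a<A. mu h wh Vb i s a * (ww i * qb h wh Vb i s a))))) / lam i"

lemma mu_prob: assumes "K \<ge> 2" "c_alpha \<ge> 24" "A \<ge> 1" "1 \<le> k"
  shows "\<And>a. mu h wh Vb k s a \<ge> 0" "(\<Sum>a<A. mu h wh Vb k s a) = 1"
proof -
  define G where "G a = (\<Sum>i=1..k-1. ww i * qb h wh Vb i s a)" for a
  have Z: "(\<Sum>a'<A. exp (lam k * G a')) > 0" using assms by (intro sum_pos) (auto simp: lessThan_empty_iff)
  show "mu h wh Vb k s a \<ge> 0" for a unfolding mu_eq[OF assms] G_def[symmetric] using Z by simp
  show "(\<Sum>a<A. mu h wh Vb k s a) = 1" unfolding mu_eq[OF assms] G_def[symmetric] using Z
    by (simp add: sum_divide_distrib[symmetric])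
qed

lemma regret_raw: assumes "K \<ge> 2" "c_alpha \<ge> 24" "H \<ge> 1" "A \<ge> 1" "a < A"
  shows "(\<Sum>k=1..K. alphaK k * qb h wh Vb k s a) \<le> (\<Sum>k=1..K. alphaK k * (\<Sum>a<A. mu h wh Vb k s a * qb h wh Vb k s a))
          + PP K * ln (real A) / lam K + (\<Sum>k=1..K. PP K * TT h wh Vb k s)"
proof -
  have r: "(\<Sum>i=1..K. ww i * qb h wh Vb i s a) \<le> ln (real A) / lam K + (\<Sum>i=1..K. ww i * (\<Sum>a<A. mu h wh Vb i s a * qb h wh Vb i s a)
          + TT h wh Vb i s)"
    unfolding TT_def
    by (rule ftrl_regret[where mu = "\<lambda>k a. mu h wh Vb k s a"])
       (use assms lam_pos[OF assms(1,2,3)] lam_mono[OF assms(1,2,3)] mu_eq[OF assms(1,2,4)] in auto)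
  have P: "PP K > 0" using PP_pos[OF assms(1,2)] .
  have "(\<Sum>k=1..K. alphaK k * qb h wh Vb k s a) = PP K * (\<Sum>i=1..K. ww i * qb h wh Vb i s a)"
    by (simp add: sum_distrib_left alphaK_eq[OF assms(1,2)] mult.assoc)
  also have "\<dots> \<le> PP K * (ln (real A) / lam K + (\<Sum>i=1..K. ww i * (\<Sum>a<A. mu h wh Vb i s a * qb h wh Vb i s a)
          + TT h wh Vb i s))" using r P by (intro mult_left_mono) auto
  also have "\<dots> = (\<Sum>k=1..K. alphaK k * (\<Sum>a<A. mu h wh Vb k s a * qb h wh Vb k s a))
          + PP K * ln (real A) / lam K + (\<Sum>k=1..K. PP K * TT h wh Vb k s)"
    by (simp add: distrib_left sum.distrib sum_distrib_left alphaK_eq[OF assms(1,2)] mult.assoc)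
  finally show ?thesis .
qed

lemma TT_bounds: assumes "K \<ge> 2" "c_alpha \<ge> 24" "H \<ge> 1" "A \<ge> 1" "1 \<le> k" "k \<le> K"
  and g: "\<And>a. a < A \<Longrightarrow> 0 \<le> qb h wh Vb k s a \<and> qb h wh Vb k s a \<le> real H"
  shows "PP K * TT h wh Vb k s \<le> alphaK k * real H"
    and "lam k * ww k * real H \<le> 1 \<Longrightarrow> PP K * TT h wh Vb k s \<le> alphaK k * (lam k * ww k) * varp A (mu h wh Vb k s) (qb h wh Vb k s)"
proof -
  have P: "PP K > 0" using PP_pos[OF assms(1,2)] .
  have w: "ww k \<ge> 0" unfolding ww_def using alpha_pos[OF assms(1,2,5)] PP_pos[OF assms(1,2), of k] by simp
  have m0: "\<And>a. a < A \<Longrightarrow> mu h wh Vb k s a \<ge> 0" using mu_prob(1)[OF assms(1,2,4,5)] by simp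
  have m1: "(\<Sum>a<A. mu h wh Vb k s a) = 1" using mu_prob(2)[OF assms(1,2,4,5)] .
  have lp: "lam k > 0" using lam_pos[OF assms(1,2,3)] .
  have tb1: "ln (\<Sum>a<A. mu h wh Vb k s a * exp (lam k * (ww k * qb h wh Vb k s a
        - (\<Sum>a<A. mu h wh Vb k s a * (ww k * qb h wh Vb k s a))))) / lam k \<le> ww k * real H"
    by (rule T_bound(1)) (use m0 m1 g lp w in auto)
  have tb2: "lam k * ww k * real H \<le> 1 \<Longrightarrow> ln (\<Sum>a<A. mu h wh Vb k s a * exp (lam k * (ww k * qb h wh Vb k s a
        - (\<Sum>a<A. mu h wh Vb k s a * (ww k * qb h wh Vb k s a))))) / lam k
        \<le> lam k * (ww k)\<^sup>2 * (\<Sum>a<A. mu h wh Vb k s a * (qb h wh Vb k s a - (\<Sum>a'<A. mu h wh Vb k s a' * qb h wh Vb k s a')) ^ 2)"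
    by (rule T_bound(2)) (use m0 m1 g lp w in auto)
  have "PP K * TT h wh Vb k s \<le> PP K * (ww k * real H)"
    unfolding TT_def using tb1 P by (intro mult_left_mono) auto
  then show "PP K * TT h wh Vb k s \<le> alphaK k * real H"
    by (simp add: alphaK_eq[OF assms(1,2,5,6)] mult.assoc)
  assume sm: "lam k * ww k * real H \<le> 1"
  have "PP K * TT h wh Vb k s \<le> PP K * (lam k * (ww k)\<^sup>2 * varp A (mu h wh Vb k s) (qb h wh Vb k s))"
    unfolding TT_def using tb2[OF sm] P by (intro mult_left_mono) (auto simp: varp_def)
  then show "PP K * TT h wh Vb k s \<le> alphaK k * (lam k * ww k) * varp A (mu h wh Vb k s) (qb h wh Vb k s)"
    by (simp add: alphaK_eq[OF assms(1,2,5,6)] power2_eq_square mult_ac)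
qed


lemma regret_comb: assumes "K \<ge> 2" "c_alpha \<ge> 24" "H \<ge> 1" "A \<ge> 1" "a < A"
  and g: "\<And>k a. 1 \<le> k \<Longrightarrow> k \<le> K \<Longrightarrow> a < A \<Longrightarrow> 0 \<le> qb h wh Vb k s a \<and> qb h wh Vb k s a \<le> real H"
  and Q1: "\<And>i. K < 2 * i \<Longrightarrow> i \<le> K \<Longrightarrow> lam i * ww i \<le> bfac \<and> lam i * ww i * real H \<le> 1"
  and Q2: "PP K * ln (real A) / lam K \<le> bfac * real H / 2"
  and Q3: "(\<Sum>i\<in>{i\<in>{1..K}. 2 * i \<le> K}. alphaK i) * real H \<le> bfac * real H / 2"
  shows "(\<Sum>k=1..K. alphaK k * qb h wh Vb k s a) \<le> (\<Sum>k=1..K. alphaK k * (\<Sum>a<A. mu h wh Vb k s a * qb h wh Vb k s a))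
      + bfac * (\<Sum>k=1..K. alphaK k * (varp A (mu h wh Vb k s) (qb h wh Vb k s) + real H))"
proof -
  define V where "V k = varp A (mu h wh Vb k s) (qb h wh Vb k s)" for k
  have V0: "V k \<ge> 0" if "1 \<le> k" for k
    unfolding V_def varp_def using mu_prob(1)[OF assms(1,2,4) that] by (intro sum_nonneg mult_nonneg_nonneg) auto
  have a0: "alphaK k \<ge> 0" if "1 \<le> k" "k \<le> K" for k using alphaK_nonneg[OF assms(1,2) that] .
  have lnA: "ln (real A) \<ge> 0" using assms by simp
  have "PP K * ln (real A) / lam K \<ge> 0" using PP_pos[OF assms(1,2), of K] lam_pos[OF assms(1,2,3), of K] lnA by (meson divide_nonneg_pos less_imp_le mult_nonneg_nonneg)
  then have "0 \<le> bfac * real H" using Q2 by linarith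
  then have b0: "bfac \<ge> 0" using assms by (simp add: zero_le_mult_iff)
  define E where "E = {i\<in>{1..K}. 2 * i \<le> K}"
  have "(\<Sum>k=1..K. PP K * TT h wh Vb k s) \<le> (\<Sum>k=1..K. if 2 * k \<le> K then alphaK k * real H else bfac * (alphaK k * V k))"
  proof (intro sum_mono)
    fix k assume k: "k \<in> {1..K}"
    have gk: "\<And>a. a < A \<Longrightarrow> 0 \<le> qb h wh Vb k s a \<and> qb h wh Vb k s a \<le> real H" using g k by auto
    show "PP K * TT h wh Vb k s \<le> (if 2 * k \<le> K then alphaK k * real H else bfac * (alphaK k * V k))"
    proof (cases "2 * k \<le> K")
      case True then show ?thesis using TT_bounds(1)[OF assms(1-4) _ _ gk] k by auto
    next
      case False
      then have q: "lam k * ww k \<le> bfac" "lam k * ww k * real H \<le> 1" using Q1[of k] k by auto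
      have "PP K * TT h wh Vb k s \<le> alphaK k * (lam k * ww k) * V k"
        using TT_bounds(2)[OF assms(1-4) _ _ gk q(2)] k unfolding V_def by auto
      also have "\<dots> \<le> alphaK k * bfac * V k"
        using q(1) a0[of k] V0[of k] k by (intro mult_right_mono mult_left_mono) auto
      finally show ?thesis using False by (simp add: mult_ac)
    qed
  qed
  also have "\<dots> = (\<Sum>k\<in>E. alphaK k * real H) + (\<Sum>k\<in>{1..K} - E. bfac * (alphaK k * V k))"
  proof -
    have "(\<Sum>k=1..K. if 2 * k \<le> K then alphaK k * real H else bfac * (alphaK k * V k))
      = (\<Sum>k\<in>{1..K} \<inter> {k. 2 * k \<le> K}. alphaK k * real H) + (\<Sum>k\<in>{1..K} \<inter> - {k. 2 * k \<le> K}. bfac * (alphaK k * V k))"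
      by (rule sum.If_cases) simp
    moreover have "{1..K} \<inter> {k. 2 * k \<le> K} = E" "{1..K} \<inter> - {k. 2 * k \<le> K} = {1..K} - E" by (auto simp: E_def)
    ultimately show ?thesis by simp
  qed
  also have "(\<Sum>k\<in>{1..K} - E. bfac * (alphaK k * V k)) \<le> (\<Sum>k=1..K. bfac * (alphaK k * V k))"
    using a0 V0 b0 by (intro sum_mono2) auto
  also have "(\<Sum>k\<in>E. alphaK k * real H) \<le> bfac * real H / 2"
    using Q3 unfolding E_def by (simp add: sum_distrib_right)
  finally have T: "(\<Sum>k=1..K. PP K * TT h wh Vb k s) \<le> bfac * real H / 2 + bfac * (\<Sum>k=1..K. alphaK k * V k)"
    by (simp add: sum_distrib_left)
  have "bfac * (\<Sum>k=1..K. alphaK k * (V k + real H)) = bfac * (\<Sum>k=1..K. alphaK k * V k) + bfac * real H"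
    using alphaK_sum[OF assms(1,2)] by (simp add: distrib_left sum.distrib sum_distrib_right[symmetric])
  then show ?thesis using regret_raw[OF assms(1-5), of h wh Vb s] T Q2 unfolding V_def by linarith
qed


lemma late_alpha_sum: assumes "K \<ge> 2" "c_alpha \<ge> 24" "cc \<le> real K"
  shows "(\<Sum>j\<in>{K div 2 + 1..K}. alpha j) \<ge> cc / 4"
proof -
  have c: "cc > 0" using cc_ge[OF assms(1,2)] by simp
  have each: "alpha j \<ge> cc / (2 * real K)" if "j \<in> {K div 2 + 1..K}" for j
  proof -
    have "real j - 1 + cc \<le> 2 * real K" using that assms by auto
    moreover have "real j - 1 + cc > 0" using that c by auto
    ultimately show ?thesis unfolding alpha_eq using c by (intro divide_left_mono) auto
  qed
  have "(\<Sum>j\<in>{K div 2 + 1..K}. cc / (2 * real K)) \<le> (\<Sum>j\<in>{K div 2 + 1..K}. alpha j)"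
    using each by (intro sum_mono) auto
  moreover have "(\<Sum>j\<in>{K div 2 + 1..K}. cc / (2 * real K)) = real (K - K div 2) * (cc / (2 * real K))" by simp
  moreover have "real (K - K div 2) \<ge> real K / 2" by linarith
  moreover have "real K / 2 * (cc / (2 * real K)) = cc / 4" using assms by simp
  ultimately show ?thesis using c
    by (smt (verit) divide_nonneg_nonneg mult_right_mono of_nat_0_le_iff)
qed

lemma early_sum: assumes "K \<ge> 2" "c_alpha \<ge> 24" "cc \<le> real K"
  shows "(\<Sum>i\<in>{i\<in>{1..K}. 2 * i \<le> K}. alphaK i) \<le> 1 / real K ^ 5"
proof -
  define J where "J = {K div 2 + 1..K}"
  have fac: "0 \<le> 1 - alpha j \<and> 1 - alpha j \<le> 1" if "j \<ge> 1" for j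
    using alpha_pos[OF assms(1,2) that] by auto
  have PJ: "(\<Prod>j\<in>J. 1 - alpha j) \<le> 1 / real K ^ 6"
  proof -
    have "(\<Prod>j\<in>J. 1 - alpha j) \<le> exp (- (\<Sum>j\<in>J. alpha j))"
      using fac unfolding J_def by (intro prod_exp_bound) auto
    also have "\<dots> \<le> exp (- (6 * ln (real K)))"
    proof -
      have "6 * ln (real K) \<le> cc / 4" unfolding cc_def using assms
        by (simp add: mult_right_mono)
      then show ?thesis using late_alpha_sum[OF assms] unfolding J_def by simp
    qed
    also have "\<dots> = 1 / real K ^ 6"
    proof -
      have "exp (6 * ln (real K)) = real K ^ 6"
        using exp_of_nat_mult[of 6 "ln (real K)"] assms by simp
      then show ?thesis by (simp add: exp_minus field_simps)
    qed
    finally show ?thesis .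
  qed
  have each: "alphaK i \<le> 1 / real K ^ 6" if "i \<in> {i\<in>{1..K}. 2 * i \<le> K}" for i
  proof -
    have i: "1 \<le> i" "2 * i \<le> K" using that by auto
    have "alphaK i \<le> (\<Prod>j\<in>{i+1..K}. 1 - alpha j)"
      unfolding alphaK_def using alpha_pos[OF assms(1,2) i(1)] fac
      by (intro mult_left_le_one_le prod_nonneg) auto
    also have "\<dots> = (\<Prod>j\<in>{i+1..K} - J. 1 - alpha j) * (\<Prod>j\<in>J. 1 - alpha j)"
    proof -
      have "J \<subseteq> {i+1..K}" unfolding J_def using i by auto
      then show ?thesis by (subst prod.subset_diff[of J]) auto
    qed
    also have "\<dots> \<le> 1 * (\<Prod>j\<in>J. 1 - alpha j)"
      using fac i by (intro mult_right_mono prod_le_1 prod_nonneg) (auto simp: J_def)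
    finally show ?thesis using PJ by simp
  qed
  have "(\<Sum>i\<in>{i\<in>{1..K}. 2 * i \<le> K}. alphaK i) \<le> (\<Sum>i\<in>{i\<in>{1..K}. 2 * i \<le> K}. 1 / real K ^ 6)"
    using each by (intro sum_mono) auto
  also have "\<dots> \<le> real K * (1 / real K ^ 6)"
  proof -
    have "card {i\<in>{1..K}. 2 * i \<le> K} \<le> card {1..K}" by (intro card_mono) auto
    then have "real (card {i\<in>{1..K}. 2 * i \<le> K}) \<le> real K" by simp
    then show ?thesis by (simp add: divide_right_mono)
  qed
  also have "\<dots> = 1 / real K ^ 5" using assms by (simp add: power_eq_if)
  finally show ?thesis .
qed


definition LLn :: real where "LLn = ln (real K * real S * (real A + real B) / \<delta>)"

lemma bfac_sq: assumes "c_b \<ge> 0" "LLn \<ge> 0" shows "bfac\<^sup>2 = c_b\<^sup>2 * (LLn^3 / (real K * real H))" "bfac \<ge> 0"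
proof -
  have z: "LLn^3 / (real K * real H) \<ge> 0" using assms by simp
  show "bfac\<^sup>2 = c_b\<^sup>2 * (LLn^3 / (real K * real H))"
    unfolding bfac_def LLn_def[symmetric] using z by (simp add: power_mult_distrib)
  show "bfac \<ge> 0" unfolding bfac_def LLn_def[symmetric] using z assms by simp
qed

lemma cc_le_K: assumes "K \<ge> 2" "c_alpha \<ge> 24" "H \<ge> 1" "LLn \<ge> 1" "ln (real K) \<le> LLn"
  "32 * c_alpha * real H * LLn^4 \<le> real K"
  shows "cc \<le> real K"
proof -
  have "LLn \<le> LLn^4" using assms by (simp add: self_le_power)
  then have "c_alpha * ln (real K) \<le> c_alpha * LLn^4" using assms by (intro mult_left_mono) auto
  also have "\<dots> \<le> 32 * c_alpha * real H * LLn^4"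
  proof -
    have "1 \<le> 32 * real H" using assms by simp
    then have "c_alpha * LLn^4 * 1 \<le> c_alpha * LLn^4 * (32 * real H)" using assms by (intro mult_left_mono) auto
    then show ?thesis by (simp add: mult_ac)
  qed
  finally show ?thesis using assms unfolding cc_def by linarith
qed

lemma Q1_lem: assumes "K \<ge> 2" "c_alpha \<ge> 24" "H \<ge> 1" "LLn \<ge> 1" "ln (real K) \<le> LLn"
  "32 * c_alpha * real H * LLn^4 \<le> real K" "c_b \<ge> 2 * c_alpha" "K < 2 * i" "i \<le> K"
  shows "lam i * ww i \<le> bfac \<and> lam i * ww i * real H \<le> 1"
proof -
  have i2: "i \<ge> 2" using assms by simp
  define x where "x = real i - 1"
  have x1: "x \<ge> 1" "x \<le> real K" "x \<ge> real K / 4" using assms i2 unfolding x_def by auto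
  have c: "cc > 0" "cc \<ge> 2" using cc_ge[OF assms(1,2)] by auto
  have cK: "cc \<le> real K" using cc_le_K[OF assms(1-6)] .
  have lamww: "lam i * ww i = eta i * (cc / x)"
  proof -
    have PPi: "PP i = (1 - alpha i) * PP (i - 1)" using PP_Suc[of "i - 1"] i2 by simp
    have ne: "x + cc \<noteq> 0" using x1 c by simp
    have a1: "1 - alpha i = x / (x + cc)" unfolding alpha_eq x_def[symmetric]
    proof -
      have "1 - cc / (x + cc) = (x + cc) / (x + cc) - cc / (x + cc)" using ne by simp
      also have "\<dots> = x / (x + cc)" by (metis add_diff_cancel_right' diff_divide_distrib)
      finally show "1 - cc / (x + cc) = x / (x + cc)" .
    qed
    have a2: "alpha i = cc / (x + cc)" unfolding alpha_eq x_def by simp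
    have "lam i * ww i = eta i * (PP (i - 1) * (alpha i / ((1 - alpha i) * PP (i - 1))))"
      unfolding ww_def PPi using i2 by (simp add: lam_def max_def)
    also have "PP (i - 1) * (alpha i / ((1 - alpha i) * PP (i - 1))) = alpha i / (1 - alpha i)"
      using PP_pos[OF assms(1,2), of "i - 1"] by simp
    also have "alpha i / (1 - alpha i) = cc / x" by (subst a1, subst a2) (use x1 c ne in simp)
    finally show ?thesis .
  qed
  have lk: "ln (real K) > 0" using assms by simp
  have Y: "(lam i * ww i)\<^sup>2 = ln (real K) / ((cc / (x - 1 + cc)) * real H) * (cc / x)\<^sup>2"
  proof -
    have "alpha (i - 1) = cc / (x - 1 + cc)" unfolding alpha_eq x_def using i2 by (simp add: of_nat_diff)
    then show ?thesis unfolding lamww power_mult_distrib eta_sq(1)[OF assms(1,2,3) i2] by simp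
  qed
  have Yb: "(lam i * ww i)\<^sup>2 \<le> 32 * c_alpha * (ln (real K))\<^sup>2 / (real H * real K)"
    unfolding Y using pure_Q1[OF lk _ cc_def, of "real K" "real H" x] assms x1 cK by auto
  have cb0: "c_b \<ge> 0" using assms by simp
  have L0: "LLn \<ge> 0" using assms by simp
  have lk0: "0 \<le> ln (real K)" using lk by simp
  have pos: "lam i * ww i \<ge> 0"
    unfolding lamww using eta_sq(2)[OF assms(1,2,3) i2] x1 c by simp
  have "(lam i * ww i)\<^sup>2 \<le> bfac\<^sup>2"
    unfolding bfac_sq(1)[OF cb0 L0] using Yb pure_fin1[OF lk0 assms(5) assms(4) assms(2) assms(7), of "real K" "real H"] assms
    by simp
  then have A1: "lam i * ww i \<le> bfac" using bfac_sq(2)[OF cb0 L0] power2_le_imp_le by blast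
  have "(lam i * ww i * real H)\<^sup>2 = (lam i * ww i)\<^sup>2 * (real H)\<^sup>2" by (simp add: power_mult_distrib)
  also have "\<dots> \<le> 32 * c_alpha * (ln (real K))\<^sup>2 / (real H * real K) * (real H)\<^sup>2"
    using Yb by (intro mult_right_mono) auto
  also have "\<dots> \<le> 1" using pure_fin2[OF lk0 assms(5) assms(4) assms(2) assms(6)] assms by simp
  finally have "(lam i * ww i * real H)\<^sup>2 \<le> 1\<^sup>2" by simp
  then have "lam i * ww i * real H \<le> 1" using power2_le_imp_le by (metis zero_le_one)
  then show ?thesis using A1 by simp
qed

lemma Q2_lem: assumes "K \<ge> 2" "c_alpha \<ge> 24" "H \<ge> 1" "A \<ge> 1" "LLn \<ge> 1" "ln (real A) \<le> LLn"
  "c_b \<ge> 2 * c_alpha"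
  shows "PP K * ln (real A) / lam K \<le> bfac * real H / 2"
proof -
  have c: "cc > 0" "cc \<ge> 2" using cc_ge[OF assms(1,2)] by auto
  have lk: "ln (real K) > 0" using assms by simp
  have la: "ln (real A) \<ge> 0" using assms by simp
  have eK: "eta K > 0" using eta_sq(2)[OF assms(1,2,3,1)] .
  have a1: "0 \<le> 1 - alpha K" "1 - alpha K \<le> 1" using alpha_pos[OF assms(1,2), of K] assms by auto
  have "PP K * ln (real A) / lam K = (1 - alpha K) * (ln (real A) / eta K)"
  proof -
    have "PP K = (1 - alpha K) * PP (K - 1)" using PP_Suc[of "K - 1"] assms by simp
    moreover have "lam K = eta K * PP (K - 1)" using assms by (simp add: lam_def max_def)
    ultimately show ?thesis using PP_pos[OF assms(1,2), of "K - 1"] eK by simp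
  qed
  also have "\<dots> \<le> ln (real A) / eta K" by (rule mult_left_le_one_le) (use a1 la eK in auto)
  also have "\<dots> \<le> bfac * real H / 2"
  proof -
    have cb0: "c_b \<ge> 0" using assms by simp
    have L0: "LLn \<ge> 0" using assms by simp
    have aK: "alpha (K - 1) = cc / (real K - 2 + cc)" unfolding alpha_eq using assms by (simp add: of_nat_diff)
    have "(ln (real A) / eta K)\<^sup>2 = (ln (real A))\<^sup>2 / (ln (real K) / ((cc / (real K - 2 + cc)) * real H))"
      unfolding power_divide eta_sq(1)[OF assms(1,2,3,1)] aK by simp
    also have "\<dots> \<le> (ln (real A))\<^sup>2 * c_alpha * real H / real K"
      using pure_Q2[OF la lk cc_def c(2), of "real K" "real H"] assms by simp
    also have "\<dots> \<le> c_b\<^sup>2 * (LLn^3 / (real K * real H)) * (real H)\<^sup>2 / 4"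
      using pure_fin3[OF la assms(6) assms(5) assms(2) assms(7), of "real K" "real H"] assms by simp
    also have "\<dots> = (bfac * real H / 2)\<^sup>2"
      unfolding power_mult_distrib power_divide bfac_sq(1)[OF cb0 L0] by simp
    finally have "(ln (real A) / eta K)\<^sup>2 \<le> (bfac * real H / 2)\<^sup>2" .
    moreover have "bfac * real H / 2 \<ge> 0" using bfac_sq(2)[OF cb0 L0] by simp
    ultimately show ?thesis using power2_le_imp_le by blast
  qed
  finally show ?thesis .
qed


lemma qb_bound: assumes rb: "\<forall>h s a b. 0 \<le> r h s a b \<and> r h s a b \<le> 1" and j: "j < H"
  and Vb: "\<forall>s. 0 \<le> Vb s \<and> Vb s \<le> real j"
  shows "0 \<le> qb h wh Vb k s a \<and> qb h wh Vb k s a \<le> real H"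
proof -
  have "r h s a (fst (fst (wh k) s a)) \<le> 1" "0 \<le> r h s a (fst (fst (wh k) s a))" using rb by auto
  moreover have "0 \<le> Vb (snd (fst (wh k) s a))" "Vb (snd (fst (wh k) s a)) \<le> real j" using Vb by auto
  moreover have "real j + 1 \<le> real H" using j by linarith
  ultimately show ?thesis unfolding qb_def by linarith
qed

lemma step_main:
  assumes K: "K \<ge> 2" and ca: "c_alpha \<ge> 24" and H: "H \<ge> 1" and A: "A \<ge> 1" and L1: "LLn \<ge> 1"
    and lK: "ln (real K) \<le> LLn" and lA: "ln (real A) \<le> LLn"
    and hK: "32 * c_alpha * real H * LLn^4 \<le> real K" and hb: "c_b \<ge> 2 * c_alpha"
    and rb: "\<forall>h s a b. 0 \<le> r h s a b \<and> r h s a b \<le> 1" and j: "j < H"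
    and Vb: "\<forall>s. 0 \<le> Vb s \<and> Vb s \<le> real j" and Vs: "\<forall>s. Vs s \<le> Vb s"
  shows "Max ((\<lambda>a. \<Sum>k=1..K. alphaK k * (r (H - j) s a (fst (fst (wh k) s a)) + Vs (snd (fst (wh k) s a)))) ` {..<A})
           \<le> Vbar_step (H - j) wh Vb s"
    and "0 \<le> Vbar_step (H - j) wh Vb s" and "Vbar_step (H - j) wh Vb s \<le> real (Suc j)"
proof -
  define h where "h = H - j"
  have qbnd: "\<And>k a. 0 \<le> qb h wh Vb k s a \<and> qb h wh Vb k s a \<le> real H"
    using qb_bound[OF rb j Vb] by blast
  have cb0: "c_b \<ge> 0" using hb ca by simp
  have L0: "LLn \<ge> 0" using L1 by simp
  have b0: "bfac \<ge> 0" using bfac_sq(2)[OF cb0 L0] .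
  have cK: "cc \<le> real K" using cc_le_K[OF K ca H L1 lK hK] .
  have HK: "real H \<le> real K"
  proof -
    have "1 \<le> LLn^4" using L1 by simp
    then have "1 * 1 \<le> (32 * c_alpha) * LLn^4" using ca by (intro mult_mono) auto
    then have "real H * 1 \<le> real H * (32 * c_alpha * LLn^4)"
      by (intro mult_left_mono) auto
    then show ?thesis using hK by (simp add: mult_ac)
  qed
  have Q3: "(\<Sum>i\<in>{i\<in>{1..K}. 2 * i \<le> K}. alphaK i) * real H \<le> bfac * real H / 2"
  proof -
    have "(2 / real K)\<^sup>2 \<le> bfac\<^sup>2"
      unfolding bfac_sq(1)[OF cb0 L0] using pure_bf[of "real K" "real H" c_b LLn] K H HK hb ca L1 by simp
    then have bf: "2 / real K \<le> bfac" using b0 power2_le_imp_le by blast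
    have "1 / real K ^ 5 \<le> 1 / real K" using K by (intro divide_left_mono) (auto simp: self_le_power)
    then have "(\<Sum>i\<in>{i\<in>{1..K}. 2 * i \<le> K}. alphaK i) \<le> bfac / 2"
      using early_sum[OF K ca cK] bf by simp
    then show ?thesis using H by (simp add: mult_right_mono)
  qed
  have reg: "(\<Sum>k=1..K. alphaK k * qb h wh Vb k s a) \<le> (\<Sum>k=1..K. alphaK k * (\<Sum>a<A. mu h wh Vb k s a * qb h wh Vb k s a))
      + bfac * (\<Sum>k=1..K. alphaK k * (varp A (mu h wh Vb k s) (qb h wh Vb k s) + real H))" if a: "a < A" for a
    by (rule regret_comb[OF K ca H A a]) (use qbnd Q1_lem[OF K ca H L1 lK hK hb] Q2_lem[OF K ca H A L1 lA hb] Q3 in auto)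
  have a0: "\<And>k. k \<in> {1..K} \<Longrightarrow> alphaK k \<ge> 0" using alphaK_nonneg[OF K ca] by auto
  have hH: "real H - real h + 1 = real (Suc j)" unfolding h_def using j by (simp add: of_nat_diff)
  define F where "F a = (\<Sum>k=1..K. alphaK k * (r h s a (fst (fst (wh k) s a)) + Vs (snd (fst (wh k) s a))))" for a
  have F1: "F a \<le> (\<Sum>k=1..K. alphaK k * qb h wh Vb k s a)" for a
    unfolding F_def qb_def using a0 Vs by (intro sum_mono mult_left_mono) auto
  have F2: "F a \<le> real (Suc j)" for a
  proof -
    have "F a \<le> (\<Sum>k=1..K. alphaK k * real (Suc j))"
      unfolding F_def using a0 Vs Vb rb by (intro sum_mono mult_left_mono) (auto, smt (verit))
    also have "\<dots> = real (Suc j)" using alphaK_sum[OF K ca] by (simp add: sum_distrib_right[symmetric])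
    finally show ?thesis .
  qed
  have fin: "finite (F ` {..<A})" "F ` {..<A} \<noteq> {}" using A by (auto simp: lessThan_empty_iff)
  show "Max ((\<lambda>a. \<Sum>k=1..K. alphaK k * (r (H - j) s a (fst (fst (wh k) s a)) + Vs (snd (fst (wh k) s a)))) ` {..<A})
           \<le> Vbar_step (H - j) wh Vb s"
    unfolding h_def[symmetric] F_def[symmetric] Vbar_step_def hH
    using fin F1 F2 reg by (auto simp: Max_le_iff intro: order.trans)
  have X0: "0 \<le> (\<Sum>k=1..K. alphaK k * (\<Sum>a<A. mu h wh Vb k s a * qb h wh Vb k s a))"
    using a0 mu_prob(1)[OF K ca A] qbnd by (intro sum_nonneg mult_nonneg_nonneg) auto
  have B0: "0 \<le> bfac * (\<Sum>k=1..K. alphaK k * (varp A (mu h wh Vb k s) (qb h wh Vb k s) + real H))"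
    using a0 mu_prob(1)[OF K ca A] b0 unfolding varp_def
    by (intro sum_nonneg mult_nonneg_nonneg add_nonneg_nonneg) auto
  show "0 \<le> Vbar_step (H - j) wh Vb s" unfolding h_def[symmetric] Vbar_step_def hH using X0 B0 by simp
  show "Vbar_step (H - j) wh Vb s \<le> real (Suc j)" unfolding h_def[symmetric] Vbar_step_def hH by simp
qed


lemma main_ind:
  assumes K: "K \<ge> 2" and ca: "c_alpha \<ge> 24" and H: "H \<ge> 1" and A: "A \<ge> 1" and L1: "LLn \<ge> 1"
    and lK: "ln (real K) \<le> LLn" and lA: "ln (real A) \<le> LLn"
    and hK: "32 * c_alpha * real H * LLn^4 \<le> real K" and hb: "c_b \<ge> 2 * c_alpha"
    and rb: "\<forall>h s a b. 0 \<le> r h s a b \<and> r h s a b \<le> 1"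
  shows "j \<le> H \<Longrightarrow> \<forall>s. 0 \<le> fst (Vnext w j) s \<and> fst (Vnext w j) s \<le> real j \<and> Vstar_n w j s \<le> fst (Vnext w j) s"
proof (induction j)
  case 0 then show ?case by simp
next
  case (Suc j)
  then have j: "j < H" by simp
  from Suc.IH j have IH: "\<forall>s. 0 \<le> fst (Vnext w j) s \<and> fst (Vnext w j) s \<le> real j \<and> Vstar_n w j s \<le> fst (Vnext w j) s" by simp
  have Vb: "\<forall>s. 0 \<le> fst (Vnext w j) s \<and> fst (Vnext w j) s \<le> real j" using IH by blast
  have Vs: "\<forall>s. Vstar_n w j s \<le> fst (Vnext w j) s" using IH by blast
  note sm = step_main[where wh = "w (H - j)", OF K ca H A L1 lK lA hK hb rb j Vb Vs]
  show ?case using sm by simp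
qed

end

lemma lemma3_core:
  fixes c_alpha :: real
  assumes ca: "c_alpha \<ge> 24"
  shows "\<forall>(S::nat) (A::nat) (B::nat) (H::nat) (K::nat) (\<delta>::real) (c_b::real)
           (r :: nat \<Rightarrow> nat \<Rightarrow> nat \<Rightarrow> nat \<Rightarrow> real) (P :: nat \<Rightarrow> nat \<Rightarrow> nat \<Rightarrow> nat \<Rightarrow> nat pmf).
      S \<ge> 1 \<longrightarrow> A \<ge> 1 \<longrightarrow> B \<ge> 1 \<longrightarrow> H \<ge> 1 \<longrightarrow> K \<ge> 1 \<longrightarrow>
      0 < \<delta> \<longrightarrow> \<delta> < 1 \<longrightarrow>
      (\<forall>h s a b. 0 \<le> r h s a b \<and> r h s a b \<le> 1) \<longrightarrow>
      (\<forall>h s a b. s < S \<longrightarrow> a < A \<longrightarrow> b < B \<longrightarrow> set_pmf (P h s a b) \<subseteq> {..<S}) \<longrightarrow>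
      real K \<ge> (32 * c_alpha) * real H * (ln (real K * real S * (real A + real B) / \<delta>)) ^ 4 \<longrightarrow>
      c_b \<ge> 2 * c_alpha \<longrightarrow>
      measure_pmf.prob (nashq.alg_pmf S A B H K c_alpha c_b \<delta> r P)
        {w. \<forall>h\<in>{1..H}. \<forall>s<S. nashq.Vbar S A B H K c_alpha c_b \<delta> r w h s \<ge> nashq.Vstar A H K c_alpha r w h s}
      \<ge> 1 - \<delta>"
proof (intro allI impI)
  fix S A B H K :: nat and \<delta> c_b :: real and r :: "nat \<Rightarrow> nat \<Rightarrow> nat \<Rightarrow> nat \<Rightarrow> real" and P :: "nat \<Rightarrow> nat \<Rightarrow> nat \<Rightarrow> nat \<Rightarrow> nat pmf"
  assume S: "S \<ge> 1" and A: "A \<ge> 1" and B: "B \<ge> 1" and H: "H \<ge> 1" and K1: "K \<ge> 1"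
    and d0: "0 < \<delta>" and d1: "\<delta> < 1" and rb: "\<forall>h s a b. 0 \<le> r h s a b \<and> r h s a b \<le> 1"
    and Pb: "\<forall>h s a b. s < S \<longrightarrow> a < A \<longrightarrow> b < B \<longrightarrow> set_pmf (P h s a b) \<subseteq> {..<S}"
    and hK0: "real K \<ge> (32 * c_alpha) * real H * (ln (real K * real S * (real A + real B) / \<delta>)) ^ 4"
    and hb: "c_b \<ge> 2 * c_alpha"
  interpret nashq S A B H K c_alpha c_b \<delta> r P .
  define x where "x = real K * real S * (real A + real B) / \<delta>"
  have LLx: "LLn = ln x" unfolding LLn_def x_def ..
  have x1: "real K * real S * (real A + real B) \<le> x"
    unfolding x_def using d0 d1 S A B K1 by (simp add: le_divide_eq)
  have KSA: "2 * real K \<le> real K * real S * (real A + real B)"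
  proof -
    have "1 * 2 \<le> real S * (real A + real B)" using S A B by (intro mult_mono) auto
    then show ?thesis using K1 by (simp add: mult.assoc mult_left_mono)
  qed
  have xK: "2 * real K \<le> x" using x1 KSA by linarith
  have xA: "real A \<le> x"
  proof -
    have "real A \<le> 1 * 1 * (real A + real B)" by simp
    also have "\<dots> \<le> real K * real S * (real A + real B)" using K1 S by (intro mult_right_mono mult_mono) auto
    finally show ?thesis using x1 by linarith
  qed
  have hK: "32 * c_alpha * real H * LLn^4 \<le> real K" using hK0 unfolding LLx x_def by simp
  have LL2: "LLn \<ge> ln (2 * real K)" unfolding LLx using xK K1 by (subst ln_le_cancel_iff) auto
  have K: "K \<ge> 2"
  proof (rule ccontr)
    assume "\<not> K \<ge> 2"
    then have K1': "K = 1" using K1 by simp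
    have "LLn \<ge> 1/2" using LL2 ln2 K1' by simp
    then have "(1/2)^4 \<le> LLn^4" by (intro power_mono) auto
    then have "32 * c_alpha * real H * (1/2)^4 \<le> 32 * c_alpha * real H * LLn^4" using ca H by (intro mult_left_mono) auto
    moreover have "32 * c_alpha * real H * (1/2)^4 \<ge> 48"
    proof -
      have e: "32 * c_alpha * real H * (1/2)^4 = 2 * (c_alpha * real H)" by (simp add: power_divide)
      have "c_alpha * 1 \<le> c_alpha * real H" using ca H by (intro mult_left_mono) auto
      then show ?thesis unfolding e using ca by linarith
    qed
    ultimately show False using hK K1' by simp
  qed
  have L1: "LLn \<ge> 1"
  proof -
    have "ln 4 \<le> ln (2 * real K)" using K by (subst ln_le_cancel_iff) auto
    then show ?thesis using LL2 ln4 by linarith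
  qed
  have lK: "ln (real K) \<le> LLn" unfolding LLx using xK K by (subst ln_le_cancel_iff) auto
  have lA: "ln (real A) \<le> LLn" unfolding LLx using xA A by (subst ln_le_cancel_iff) auto
  have all: "\<forall>h\<in>{1..H}. \<forall>s<S. Vbar w h s \<ge> Vstar w h s" for w
  proof (intro ballI allI impI)
    fix h s assume h: "h \<in> {1..H}" and s: "s < S"
    have "H + 1 - h \<le> H" using h by auto
    from main_ind[OF K ca H A L1 lK lA hK hb rb this, of w]
    show "Vbar w h s \<ge> Vstar w h s" unfolding Vbar_def Vstar_def by blast
  qed
  have "{w. \<forall>h\<in>{1..H}. \<forall>s<S. Vbar w h s \<ge> Vstar w h s} = UNIV" using all by blast
  then show "measure_pmf.prob alg_pmf {w. \<forall>h\<in>{1..H}. \<forall>s<S. Vbar w h s \<ge> Vstar w h s} \<ge> 1 - \<delta>"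
    using d0 by simp
qed

theorem lemma3:
  fixes c_alpha :: real
  assumes "c_alpha \<ge> 24"
  shows "\<exists>c_k > 0. \<exists>c_b0 > 0. \<forall>(S::nat) (A::nat) (B::nat) (H::nat) (K::nat) (\<delta>::real) (c_b::real)
           (r :: nat \<Rightarrow> nat \<Rightarrow> nat \<Rightarrow> nat \<Rightarrow> real) (P :: nat \<Rightarrow> nat \<Rightarrow> nat \<Rightarrow> nat \<Rightarrow> nat pmf).
      S \<ge> 1 \<longrightarrow> A \<ge> 1 \<longrightarrow> B \<ge> 1 \<longrightarrow> H \<ge> 1 \<longrightarrow> K \<ge> 1 \<longrightarrow>
      0 < \<delta> \<longrightarrow> \<delta> < 1 \<longrightarrow>
      (\<forall>h s a b. 0 \<le> r h s a b \<and> r h s a b \<le> 1) \<longrightarrow>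
      (\<forall>h s a b. s < S \<longrightarrow> a < A \<longrightarrow> b < B \<longrightarrow> set_pmf (P h s a b) \<subseteq> {..<S}) \<longrightarrow>
      real K \<ge> c_k * real H * (ln (real K * real S * (real A + real B) / \<delta>)) ^ 4 \<longrightarrow>
      c_b \<ge> c_b0 \<longrightarrow>
      measure_pmf.prob (nashq.alg_pmf S A B H K c_alpha c_b \<delta> r P)
        {w. \<forall>h\<in>{1..H}. \<forall>s<S. nashq.Vbar S A B H K c_alpha c_b \<delta> r w h s \<ge> nashq.Vstar A H K c_alpha r w h s}
      \<ge> 1 - \<delta>"
proof -
  show ?thesis
    apply (rule exI[where x = "32 * c_alpha"])
    apply (rule conjI)
    using assms apply simp
    apply (rule exI[where x = "2 * c_alpha"])
    apply (rule conjI)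
    using assms apply simp
    by (rule lemma3_core[OF assms])
qed

end
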